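(* Let $\mathcal{A}=\{\alpha_1<\dots<\alpha_m\}\subset(0,1)$. If the base forecasts are point forecasts, $b_t=[k_t,\dots,k_t]$ for some $k_t\in\mathbb{R}$, and $|y_t-k_t|\le R$ for all $t$, then the MultiQT iterates (learning rate $\eta>0$, initial hidden offset $\tilde\theta_1\in\mathcal{K}$) satisfy $\|\theta_t-\tilde\theta_t\|_2\le\frac{\eta|\mathcal{A}|^{3/2}}{\sqrt3}$ for all $t$.
   Context: $\mathcal{K}=\{x\in\mathbb{R}^m:x_1\le\dots\le x_m\}$; $\Pi_C$ Euclidean projection; $C-v=\{x-v:x\in C\}$. MultiQT: for $t=1,2,\dots$, played offset $\theta_t=\Pi_{\mathcal{K}-b_t}(\tilde\theta_t)$, forecast $q_t=b_t+\theta_t$, $\mathrm{cov}_t^{\alpha}=\mathbb{1}\{y_t\le q_t^{\alpha}\}$, hidden update $\tilde\theta_{t+1}^{\alpha}=\tilde\theta_t^{\alpha}-\eta(\mathrm{cov}_t^{\alpha}-\alpha)$. *)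

theory Defs
  imports "HOL-Analysis.Analysis"
begin

text \<open>The isotonic cone K = {x : x_1 \<le> ... \<le> x_m}, with coordinates indexed by a
finite linearly ordered type 'n (so m = CARD('n)).\<close>
definition isoK :: "(real ^ ('n::{finite,linorder})) set" where
  "isoK = {x. \<forall>i j. i \<le> j \<longrightarrow> x $ i \<le> x $ j}"

definition set_minus_vec :: "(real ^ 'n::finite) set \<Rightarrow> real ^ 'n \<Rightarrow> (real ^ 'n) set" where
  "set_minus_vec C v = (\<lambda>x. x - v) ` C"

definition mqt_played :: "real ^ ('n::{finite,linorder}) \<Rightarrow> real ^ ('n::{finite,linorder}) \<Rightarrow> real ^ ('n::{finite,linorder})" where
  "mqt_played b th = closest_point (set_minus_vec isoK b) th"

definition mqt_step :: "real \<Rightarrow> (('n::{finite,linorder}) \<Rightarrow> real) \<Rightarrow> real ^ ('n::{finite,linorder}) \<Rightarrow> real \<Rightarrow> real ^ ('n::{finite,linorder}) \<Rightarrow> real ^ ('n::{finite,linorder})" where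
  "mqt_step eta alpha b y th =
     (let q = b + mqt_played b th in
      th - eta *\<^sub>R (\<chi> i. of_bool (y \<le> q $ i) - alpha i))"

end

theory Submission
  imports Defs
begin

lemma isoK_closed: "closed (isoK :: (real ^ ('n::{finite,linorder})) set)"
proof -
  have "isoK = (\<Inter>i. \<Inter>j. {x::real^'n::{finite,linorder}. i \<le> j \<longrightarrow> x $ i \<le> x $ j})"
    unfolding isoK_def by auto
  moreover have "closed {x::real^'n::{finite,linorder}. i \<le> j \<longrightarrow> x $ i \<le> x $ j}" for i j
    by (cases "i \<le> j") (auto intro!: closed_Collect_le continuous_intros)
  ultimately show ?thesis by (metis (no_types, lifting) closed_INT)
qed

lemma isoK_convex: "convex (isoK :: (real ^ ('n::{finite,linorder})) set)"
  unfolding convex_def isoK_def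
proof (clarsimp)
  fix x y :: "real^'n::{finite,linorder}" and u v :: real and i j :: 'n
  assume "\<forall>i j. i \<le> j \<longrightarrow> x $ i \<le> x $ j" "\<forall>i j. i \<le> j \<longrightarrow> y $ i \<le> y $ j"
    "0 \<le> u" "0 \<le> v" "u + v = 1" "i \<le> j"
  then show "u * x $ i + v * y $ i \<le> u * x $ j + v * y $ j"
    by (meson add_mono mult_left_mono)
qed

lemma isoK_ne: "isoK \<noteq> {}"
  unfolding isoK_def by (rule ex_in_conv[THEN iffD1]) (rule exI[of _ 0], auto)

lemma isoK_shift: "set_minus_vec isoK (\<chi> i. c) = isoK"
  unfolding set_minus_vec_def isoK_def
proof (auto simp: image_iff)
  fix x :: "real^'n::{finite,linorder}" assume h: "\<forall>i j. i \<le> j \<longrightarrow> x $ i \<le> x $ j"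
  show "\<exists>y. (\<forall>i j. i \<le> j \<longrightarrow> y $ i \<le> y $ j) \<and> x = y - (\<chi> i. c)"
    by (rule exI[of _ "x + (\<chi> i. c)"]) (use h in auto)
qed

definition adj :: "'n::linorder \<Rightarrow> 'n \<Rightarrow> bool" where
  "adj i j \<longleftrightarrow> i < j \<and> (\<forall>l. \<not> (i < l \<and> l < j))"

lemma proj_adj:
  fixes x :: "real ^ ('n::{finite,linorder})"
  assumes ij: "adj i j" and lt: "closest_point isoK x $ i < closest_point isoK x $ j"
  shows "x $ i \<le> x $ j"
proof -
  let ?p = "closest_point isoK x"
  have pK: "?p \<in> isoK" using closest_point_in_set[OF isoK_closed isoK_ne] .
  have best: "\<forall>z\<in>isoK. dist x ?p \<le> dist x z"
    using closest_point_exists(2)[OF isoK_closed isoK_ne] by blast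
  define e where "e = (?p $ j - ?p $ i) / 2"
  have e: "e > 0" using lt by (simp add: e_def)
  define z where "z = ?p + e *\<^sub>R (axis i 1 - axis j 1)"
  have ineq: "i < j" using ij by (simp add: adj_def)
  have zi: "z $ i = ?p $ i + e" using ineq by (simp add: z_def axis_def)
  have zj: "z $ j = ?p $ j - e" using ineq by (simp add: z_def axis_def)
  have zl: "l \<noteq> i \<Longrightarrow> l \<noteq> j \<Longrightarrow> z $ l = ?p $ l" for l by (simp add: z_def axis_def)
  have pmono: "a \<le> b \<Longrightarrow> ?p $ a \<le> ?p $ b" for a b using pK by (simp add: isoK_def)
  have zK: "z \<in> isoK"
    unfolding isoK_def
  proof (clarify)
    fix a b :: 'n assume ab: "a \<le> b"
    have nb: "\<not> (i < l \<and> l < j)" for l using ij by (simp add: adj_def)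
    show "z $ a \<le> z $ b"
    proof (cases "a = b")
      case True then show ?thesis by simp
    next
      case False
      hence ab': "a < b" using ab by simp
      show ?thesis
      proof (cases "a = i")
        case ai: True
        show ?thesis
        proof (cases "b = j")
          case True
          have "z $ i \<le> z $ j" unfolding zi zj e_def by (simp add: field_simps)
          then show ?thesis using ai True by simp
        next
          case False
          hence "j < b" using ab' ai nb[of b] by auto
          hence "z $ b = ?p $ b" "?p $ j \<le> ?p $ b" using zl[of b] pmono[of j b] ineq by auto
          moreover have "z $ i \<le> ?p $ j" unfolding zi e_def using lt by (simp add: field_simps)
          ultimately show ?thesis using ai by simp
        qed
      next
        case ani: False
        show ?thesis
        proof (cases "a = j")
          case True
          hence "b \<noteq> i" using ab' ineq by auto
          hence "z $ b = ?p $ b" using zl[of b] ab' True by auto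
          moreover have "?p $ j \<le> ?p $ b" using pmono[OF less_imp_le] ab' True by simp
          ultimately show ?thesis using True zj e by simp
        next
          case anj: False
          have za: "z $ a = ?p $ a" using zl ani anj by simp
          show ?thesis
          proof (cases "b = i")
            case True
            have "?p $ a \<le> ?p $ i" using pmono[OF less_imp_le] ab' True by simp
            then show ?thesis using za zi True e by simp
          next
            case bni: False
            show ?thesis
            proof (cases "b = j")
              case True
              hence "a < i \<or> a > i" using ani by auto
              hence "a < i" using nb[of a] ab' True by auto
              moreover have "?p $ a \<le> ?p $ i" using pmono[OF less_imp_le] \<open>a < i\<close> by blast
              moreover have "?p $ i \<le> z $ j" unfolding zj e_def using lt by (simp add: field_simps)
              ultimately show ?thesis using za True by simp
            next
              case False
              then show ?thesis using za zl[of b] bni pmono[of a b] ab by auto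
            qed
          qed
        qed
      qed
    qed
  qed
  have "inner (x - ?p) (z - ?p) \<le> 0"
    using any_closest_point_dot[OF isoK_convex isoK_closed pK zK best] .
  moreover have "inner (x - ?p) (z - ?p) = e * ((x - ?p) $ i - (x - ?p) $ j)"
    by (simp add: z_def inner_diff_right inner_axis algebra_simps)
  ultimately have "(x - ?p) $ i - (x - ?p) $ j \<le> 0"
    using e by (simp add: mult_le_0_iff)
  then show ?thesis using lt by simp
qed


definition rk :: "'n::{finite,linorder} \<Rightarrow> nat" where
  "rk i = card {l. l < i}"

lemma rk_adj: "adj i j \<Longrightarrow> rk j = Suc (rk i)"
proof -
  assume a: "adj i j"
  have "{l. l < j} = insert i {l. l < i}"
  proof (intro set_eqI iffI)
    fix x assume "x \<in> {l. l < j}"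
    hence "x < j" by simp
    moreover have "\<not> (i < x \<and> x < j)" using a unfolding adj_def by blast
    ultimately have "x \<le> i" by (simp add: not_less)
    then show "x \<in> insert i {l. l < i}" by (auto simp: le_less)
  next
    fix x assume "x \<in> insert i {l. l < i}"
    then show "x \<in> {l. l < j}" using a unfolding adj_def by auto
  qed
  then show ?thesis unfolding rk_def by simp
qed

lemma rk_mono: "(i::'n::{finite,linorder}) < j \<Longrightarrow> rk i < rk j"
  unfolding rk_def by (rule psubset_card_mono) auto

lemma rk_lt: "rk (i::'n::{finite,linorder}) < CARD('n)"
  unfolding rk_def by (rule psubset_card_mono) auto

lemma chain_gen:
  fixes f :: "'n::{finite,linorder} \<Rightarrow> real"
  assumes adjb: "\<And>i j. adj i j \<Longrightarrow> f j - f i \<ge> - c"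
  shows "card {l. i < l \<and> l < j} = n \<Longrightarrow> i < j \<Longrightarrow> f j - f i \<ge> - c * (real (rk j) - real (rk i))"
proof (induction n arbitrary: i j rule: less_induct)
  case (less n)
  show ?case
  proof (cases "\<exists>l. i < l \<and> l < j")
    case False
    hence a: "adj i j" using less.prems by (simp add: adj_def)
    show ?thesis using adjb[OF a] rk_adj[OF a] by simp
  next
    case True
    then obtain l where l: "i < l" "l < j" by blast
    have c1: "card {m. i < m \<and> m < l} < n"
      unfolding less.prems(1)[symmetric] by (rule psubset_card_mono) (use l in auto)
    have c2: "card {m. l < m \<and> m < j} < n"
      unfolding less.prems(1)[symmetric] by (rule psubset_card_mono) (use l in auto)
    have h1: "f l - f i \<ge> - c * (real (rk l) - real (rk i))"
      using less.IH[OF c1 refl l(1)] .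
    have h2: "f j - f l \<ge> - c * (real (rk j) - real (rk l))"
      using less.IH[OF c2 refl l(2)] .
    have "- c * (real (rk j) - real (rk i)) = - c * (real (rk j) - real (rk l)) + - c * (real (rk l) - real (rk i))"
      by (simp add: algebra_simps)
    then show ?thesis using h1 h2 by linarith
  qed
qed

lemma chain:
  fixes f :: "'n::{finite,linorder} \<Rightarrow> real"
  assumes adjb: "\<And>i j. adj i j \<Longrightarrow> f j - f i \<ge> - c"
  shows "i < j \<Longrightarrow> f j - f i \<ge> - c * (real (rk j) - real (rk i))"
  using chain_gen[where f=f and c=c and n="card {l. i < l \<and> l < j}"] adjb by blast

lemma sum_sq_bound: "(\<Sum>k<m. (real k)^2) \<le> real m ^ 3 / 3"
proof (induction m)
  case 0 then show ?case by simp
next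
  case (Suc m)
  have "(\<Sum>k<Suc m. (real k)^2) = (\<Sum>k<m. (real k)^2) + (real m)^2" by simp
  also have "\<dots> \<le> real m ^ 3 / 3 + (real m)^2" using Suc by simp
  also have "\<dots> \<le> real (Suc m) ^ 3 / 3" by (simp add: power3_eq_cube power2_eq_square algebra_simps)
  finally show ?case .
qed

lemma rk_sum: "(\<Sum>i\<in>(UNIV::'n::{finite,linorder} set). (real (rk i))^2) \<le> real CARD('n) ^ 3 / 3"
proof -
  have inj: "inj (rk :: 'n \<Rightarrow> nat)"
    by (metis linorder_inj_onI' rk_mono less_irrefl)
  have "rk ` (UNIV::'n set) \<subseteq> {..<CARD('n)}" using rk_lt by auto
  moreover have "card (rk ` (UNIV::'n set)) = card {..<CARD('n)}"
    using card_image[OF inj] by simp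
  ultimately have im: "rk ` (UNIV::'n set) = {..<CARD('n)}"
    by (simp add: card_subset_eq)
  have "(\<Sum>i\<in>(UNIV::'n set). (real (rk i))^2) = (\<Sum>k\<in>rk ` (UNIV::'n set). (real k)^2)"
    by (subst sum.reindex[OF inj]) (simp add: o_def)
  also have "\<dots> = (\<Sum>k<CARD('n). (real k)^2)" using im by simp
  finally show ?thesis using sum_sq_bound by simp
qed


lemma norm_rk:
  fixes eta :: real
  assumes "eta > 0"
  shows "norm (\<chi> i::'n::{finite,linorder}. eta * real (rk i)) \<le> eta * real CARD('n) powr (3/2) / sqrt 3"
proof -
  let ?m = "real CARD('n)"
  have "norm (\<chi> i::'n. eta * real (rk i)) = sqrt (\<Sum>i\<in>(UNIV::'n set). (eta * real (rk i))^2)"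
    unfolding norm_vec_def L2_set_def by simp
  also have "(\<Sum>i\<in>(UNIV::'n set). (eta * real (rk i))^2) = eta^2 * (\<Sum>i\<in>(UNIV::'n set). (real (rk i))^2)"
    by (simp add: power_mult_distrib sum_distrib_left)
  also have "sqrt (eta^2 * (\<Sum>i\<in>(UNIV::'n set). (real (rk i))^2)) \<le> sqrt (eta^2 * (?m ^ 3 / 3))"
    using rk_sum[where 'n='n] by (intro real_sqrt_le_mono mult_left_mono) auto
  also have "sqrt (eta^2 * (?m ^ 3 / 3)) = eta * sqrt (?m ^ 3) / sqrt 3"
    using assms by (simp add: real_sqrt_mult real_sqrt_divide)
  also have "sqrt (?m ^ 3) = ?m powr (3/2)"
    using powr_half_sqrt_powr[of ?m 3] by (simp add: powr_realpow)
  finally show ?thesis .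
qed

theorem lemma3:
  fixes alpha :: "('n::{finite,linorder}) \<Rightarrow> real"
    and eta R :: real
    and k y :: "nat \<Rightarrow> real"
    and b hid :: "nat \<Rightarrow> real ^ ('n::{finite,linorder})"
  assumes alpha_mono: "strict_mono alpha"
    and alpha_range: "\<forall>i. 0 < alpha i \<and> alpha i < 1"
    and eta_pos: "eta > 0"
    and point_forecasts: "\<forall>t\<ge>1. b t = (\<chi> i. k t)"
    and bounded: "\<forall>t\<ge>1. \<bar>y t - k t\<bar> \<le> R"
    and init: "hid 1 \<in> isoK"
    and update: "\<forall>t\<ge>1. hid (Suc t) = mqt_step eta alpha (b t) (y t) (hid t)"
  shows "\<forall>t\<ge>1. norm (mqt_played (b t) (hid t) - hid t)
                  \<le> eta * real CARD(('n::{finite,linorder})) powr (3/2) / sqrt 3"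
proof -
  have played: "mqt_played (b t) th = closest_point isoK th" if "t \<ge> 1" for t th
    using point_forecasts that by (simp add: mqt_played_def isoK_shift)
  define inv where "inv t \<longleftrightarrow> (\<forall>i j. adj i j \<longrightarrow> hid t $ j - hid t $ i \<ge> - eta)" for t
  have step_inv: "inv (Suc t)" if t1: "t \<ge> 1" and it: "inv t" for t
    unfolding inv_def
  proof (intro allI impI)
    fix i j :: 'n assume a: "adj i j"
    let ?x = "hid t"
    let ?p = "closest_point isoK ?x"
    let ?cov = "\<lambda>l. of_bool (y t \<le> k t + ?p $ l) :: real"
    have hs: "hid (Suc t) $ l = ?x $ l - eta * (?cov l - alpha l)" for l
      using update t1 played[OF t1] point_forecasts
      by (simp add: mqt_step_def Let_def)
    have ij: "i < j" using a by (simp add: adj_def)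
    have al: "alpha i < alpha j" using alpha_mono ij by (simp add: strict_mono_def)
    have g0: "?x $ j - ?x $ i \<ge> - eta" using it a by (simp add: inv_def)
    have pK: "?p \<in> isoK" using closest_point_in_set[OF isoK_closed isoK_ne] .
    have ple: "?p $ i \<le> ?p $ j" using pK ij by (simp add: isoK_def)
    have eq: "hid (Suc t) $ j - hid (Suc t) $ i = (?x $ j - ?x $ i) - eta * (?cov j - ?cov i) + eta * (alpha j - alpha i)"
      unfolding hs by (simp add: algebra_simps)
    have ea: "eta * (alpha j - alpha i) \<ge> 0" using al eta_pos by simp
    show "hid (Suc t) $ j - hid (Suc t) $ i \<ge> - eta"
    proof (cases "?x $ i \<le> ?x $ j")
      case True
      have "?cov j - ?cov i \<le> 1" by simp
      hence "eta * (?cov j - ?cov i) \<le> eta" using eta_pos by (simp add: mult_left_le)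
      then show ?thesis using eq True ea by linarith
    next
      case False
      hence "\<not> ?p $ i < ?p $ j" using proj_adj[OF a] by blast
      hence "?p $ i = ?p $ j" using ple by simp
      hence "?cov j - ?cov i = 0" by simp
      then show ?thesis using eq g0 ea by simp
    qed
  qed
  have inv0: "inv 1" unfolding inv_def using init eta_pos
    by (auto simp: isoK_def adj_def) (smt (verit) less_imp_le)
  have allinv: "inv t" if "t \<ge> 1" for t
    using that
  proof (induction t rule: dec_induct)
    case base then show ?case using inv0 .
  next
    case (step n) then show ?case using step_inv by simp
  qed
  show ?thesis
  proof (intro allI impI)
    fix t :: nat assume t1: "t \<ge> 1"
    let ?x = "hid t"
    define z where "z = (\<chi> i. ?x $ i + eta * real (rk i))"
    have zK: "z \<in> isoK" unfolding isoK_def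
    proof (clarify)
      fix i j :: 'n assume "i \<le> j"
      show "z $ i \<le> z $ j"
      proof (cases "i = j")
        case False
        hence ij: "i < j" using \<open>i \<le> j\<close> by simp
        have "?x $ j - ?x $ i \<ge> - eta * (real (rk j) - real (rk i))"
          using chain[where f="\<lambda>l. ?x $ l" and c=eta] allinv[OF t1] ij unfolding inv_def by blast
        then show ?thesis by (simp add: z_def algebra_simps)
      qed simp
    qed
    have "norm (mqt_played (b t) ?x - ?x) = dist ?x (closest_point isoK ?x)"
      using played[OF t1] by (simp add: dist_norm norm_minus_commute)
    also have "\<dots> \<le> dist ?x z" by (rule closest_point_le[OF isoK_closed zK])
    also have "dist ?x z = norm (\<chi> i::'n. eta * real (rk i))"
    proof -
      have "z - ?x = (\<chi> i::'n. eta * real (rk i))" by (simp add: z_def vec_eq_iff)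
      then show ?thesis by (simp add: dist_norm norm_minus_commute[of ?x])
    qed
    also have "\<dots> \<le> eta * real CARD('n) powr (3/2) / sqrt 3" by (rule norm_rk[OF eta_pos])
    finally show "norm (mqt_played (b t) (hid t) - hid t) \<le> eta * real CARD('n) powr (3/2) / sqrt 3" .
  qed
qed

end
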